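(* For every integer $m\geq 3$, the edge set of $C_m[4]$ can be partitioned into two $C_4$-factors and two $C_m$-factors.
   Context: For a graph $G$ and a positive integer $k$, $G[k]$ is the graph with vertex set $V(G)\times\{0,1,\dots,k-1\}$ in which $(u,i)$ and $(w,j)$ are adjacent if and only if $uw\in E(G)$. $C_m$ is the cycle of length $m$. A $C_k$-factor of a graph is a spanning subgraph each of whose components is a cycle of length $k$. *)

theory Defs
  imports Main
begin

text \<open>Simple graphs are given by a vertex set V and an edge set E of 2-element sets.\<close>

definition cycle_graph_vertices :: "nat \<Rightarrow> nat set" where
  "cycle_graph_vertices m = {0..<m}"

definition cycle_graph_edges :: "nat \<Rightarrow> nat set set" where
  "cycle_graph_edges m = {{i, (i + 1) mod m} | i. i < m}"

definition lex_vertices :: "'a set \<Rightarrow> nat \<Rightarrow> ('a \<times> nat) set" where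
  "lex_vertices V k = V \<times> {0..<k}"

definition lex_edges :: "'a set set \<Rightarrow> nat \<Rightarrow> ('a \<times> nat) set set" where
  "lex_edges E k = {{(u, i), (w, j)} | u w i j. {u, w} \<in> E \<and> i < k \<and> j < k}"

definition list_cycle_edges :: "'a list \<Rightarrow> 'a set set" where
  "list_cycle_edges xs = {{xs ! i, xs ! ((i + 1) mod length xs)} | i. i < length xs}"

definition is_Ck_factor :: "nat \<Rightarrow> 'a set \<Rightarrow> 'a set set \<Rightarrow> 'a set set \<Rightarrow> bool" where
  "is_Ck_factor k V E F \<longleftrightarrow> 3 \<le> k \<and> F \<subseteq> E \<and>
     (\<exists>Cs :: 'a list set.
        (\<forall>c\<in>Cs. length c = k \<and> distinct c) \<and>
        (\<forall>c\<in>Cs. \<forall>d\<in>Cs. c \<noteq> d \<longrightarrow> set c \<inter> set d = {}) \<and>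
        (\<Union>c\<in>Cs. set c) = V \<and>
        F = (\<Union>c\<in>Cs. list_cycle_edges c))"

end

theory Submission
  imports Defs
begin

definition E :: "nat \<Rightarrow> nat \<Rightarrow> nat \<Rightarrow> nat \<Rightarrow> (nat\<times>nat) set" where
  "E m t a b = {(t,a), (Suc t mod m, b)}"
lemma Suc_mod_cases:
  assumes "t < m" shows "Suc t mod m = (if t = m - 1 then 0 else Suc t)"
  using assms by (auto simp: mod_if)

lemma no_swap:
  assumes "m \<ge> 3" "t < m" "t' < m" "t = Suc t' mod m" "Suc t mod m = t'"
  shows False
proof -
  have A: "t = (if t' = m - 1 then 0 else Suc t')" using assms(4) Suc_mod_cases[OF assms(3)] by simp
  have B: "t' = (if t = m - 1 then 0 else Suc t)" using assms(5) Suc_mod_cases[OF assms(2)] by simp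
  show False
  proof (cases "t' = m - 1")
    case True
    then have "t = 0" using A by simp
    then have "t' = 1" using B assms(1) by simp
    then show False using True assms(1) by simp
  next
    case False
    then have "t = Suc t'" using A by simp
    then show False using B assms(1,2) by (cases "t = m - 1") simp_all
  qed
qed

lemma E_inj:
  assumes "m \<ge> 3" "t < m" "t' < m" "E m t a b = E m t' a' b'"
  shows "t = t' \<and> a = a' \<and> b = b'"
proof -
  have "((t,a) = (t',a') \<and> (Suc t mod m, b) = (Suc t' mod m, b')) \<or>
        ((t,a) = (Suc t' mod m, b') \<and> (Suc t mod m, b) = (t', a'))"
    using assms(4) unfolding E_def by (simp add: doubleton_eq_iff)
  then show ?thesis using no_swap[OF assms(1-3)] by auto
qed
lemma lex_eq:
  assumes "m \<ge> 3"
  shows "lex_edges (cycle_graph_edges m) 4 = {E m t a b | t a b. t < m \<and> a < 4 \<and> b < 4}"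
proof (intro equalityI subsetI)
  fix e assume "e \<in> lex_edges (cycle_graph_edges m) 4"
  then obtain u w i j where e: "e = {(u,i),(w,j)}" "{u,w} \<in> cycle_graph_edges m" "i<4" "j<4"
    unfolding lex_edges_def by (auto simp only: mem_Collect_eq)
  then obtain k where k: "{u,w} = {k, (k+1) mod m}" "k < m"
    unfolding cycle_graph_edges_def by (auto simp only: mem_Collect_eq)
  then have "(u = k \<and> w = Suc k mod m) \<or> (u = Suc k mod m \<and> w = k)"
    by (simp add: doubleton_eq_iff)
  then have "e = E m k i j \<or> e = E m k j i" using e unfolding E_def by (auto simp: insert_commute)
  then show "e \<in> {E m t a b | t a b. t < m \<and> a < 4 \<and> b < 4}"
    using e k by auto
next
  fix e assume "e \<in> {E m t a b | t a b. t < m \<and> a < 4 \<and> b < 4}"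
  then obtain t a b where "e = E m t a b" "t<m" "a<4" "b<4" by auto
  moreover have "{t, Suc t mod m} \<in> cycle_graph_edges m"
    using \<open>t<m\<close> unfolding cycle_graph_edges_def by auto
  ultimately show "e \<in> lex_edges (cycle_graph_edges m) 4"
    unfolding lex_edges_def E_def by auto
qed

definition tabB :: "nat \<Rightarrow> nat \<Rightarrow> nat" where
  "tabB a b = [[2,0,0,3],[1,3,2,1],[1,2,3,1],[3,0,0,2]] ! a ! b"
definition tab0 :: "nat \<Rightarrow> nat \<Rightarrow> nat" where
  "tab0 a b = [[2,0,3,0],[3,1,1,2],[1,3,2,1],[0,2,0,3]] ! a ! b"
definition tab1 :: "nat \<Rightarrow> nat \<Rightarrow> nat" where
  "tab1 a b = [[2,3,0,1],[1,0,3,2],[1,2,0,3],[3,0,2,1]] ! a ! b"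
definition cls :: "nat \<Rightarrow> nat \<Rightarrow> nat \<Rightarrow> nat \<Rightarrow> nat" where
  "cls m t a b = (if odd m \<and> t = m - 2 then tab0 a b else if odd m \<and> t = m - 1 then tab1 a b else tabB a b)"

lemma less4: "(a::nat) < 4 \<longleftrightarrow> a = 0 \<or> a = 1 \<or> a = 2 \<or> a = 3" by auto

lemma cls_lt: "a < 4 \<Longrightarrow> b < 4 \<Longrightarrow> cls m t a b < 4"
  unfolding less4 cls_def tab0_def tab1_def tabB_def by auto

definition FF :: "nat \<Rightarrow> nat \<Rightarrow> (nat\<times>nat) set set" where
  "FF m k = {E m t a b | t a b. t < m \<and> a < 4 \<and> b < 4 \<and> cls m t a b = k}"

lemma FF_union:
  assumes "m \<ge> 3"
  shows "FF m 0 \<union> FF m 1 \<union> FF m 2 \<union> FF m 3 = lex_edges (cycle_graph_edges m) 4"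
proof -
  have "\<And>t a b. a < 4 \<Longrightarrow> b < 4 \<Longrightarrow> cls m t a b = 0 \<or> cls m t a b = 1 \<or> cls m t a b = 2 \<or> cls m t a b = 3"
    using cls_lt less4 by blast
  then show ?thesis unfolding lex_eq[OF assms] FF_def by blast
qed

lemma FF_sub:
  assumes "m \<ge> 3"
  shows "FF m k \<subseteq> lex_edges (cycle_graph_edges m) 4"
  unfolding lex_eq[OF assms] FF_def by blast

lemma FF_disj:
  assumes "m \<ge> 3" "k \<noteq> l"
  shows "FF m k \<inter> FF m l = {}"
proof (rule ccontr)
  assume "FF m k \<inter> FF m l \<noteq> {}"
  then obtain t a b t' a' b' where "E m t a b = E m t' a' b'" "t < m" "t' < m"
    "cls m t a b = k" "cls m t' a' b' = l"
    unfolding FF_def by blast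
  then show False using E_inj[OF assms(1)] assms(2) by blast
qed

lemma l4: "length [p,q,r,s] = 4" by simp
lemma lce4: "list_cycle_edges [p,q,r,s] = {{p,q},{q,r},{r,s},{s,p}}"
proof -
  have "list_cycle_edges [p,q,r,s] = (\<lambda>i. {[p,q,r,s] ! i, [p,q,r,s] ! ((i + 1) mod 4)}) ` {i. i < 4}"
    unfolding list_cycle_edges_def image_def l4 by blast
  also have "{i::nat. i < 4} = {0,1,2,3}" by auto
  finally show ?thesis by simp
qed

lemma vert:
  fixes P f :: "nat \<Rightarrow> nat \<Rightarrow> nat"
  assumes m3: "m \<ge> 3"
    and bij: "\<And>t. t < m \<Longrightarrow> bij_betw (P t) {..<4} {..<4}"
    and step: "\<And>t i. t < m \<Longrightarrow> i < 4 \<Longrightarrow> P (Suc t mod m) i = f t (P t i)"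
    and clsf: "\<And>t a b. t < m \<Longrightarrow> a < 4 \<Longrightarrow> b < 4 \<Longrightarrow> (cls m t a b = k) = (b = f t a)"
  shows "is_Ck_factor m (lex_vertices (cycle_graph_vertices m) 4) (lex_edges (cycle_graph_edges m) 4) (FF m k)"
proof -
  define C where "C i = map (\<lambda>t. (t, P t i)) [0..<m]" for i
  define Cs where "Cs = C ` {..<4}"
  have lenC: "length (C i) = m" for i unfolding C_def by simp
  have nthC: "s < m \<Longrightarrow> C i ! s = (s, P s i)" for s i unfolding C_def by simp
  have setC: "set (C i) = {(t, P t i) | t. t < m}" for i unfolding C_def by auto
  have injP: "t < m \<Longrightarrow> i < 4 \<Longrightarrow> j < 4 \<Longrightarrow> P t i = P t j \<Longrightarrow> i = j" for t i j
    using bij[of t] unfolding bij_betw_def inj_on_def by blast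
  have surjP: "t < m \<Longrightarrow> a < 4 \<Longrightarrow> \<exists>i<4. P t i = a" for t a
    using bij[of t] unfolding bij_betw_def by (metis imageE lessThan_iff)
  have Plt: "t < m \<Longrightarrow> i < 4 \<Longrightarrow> P t i < 4" for t i
    using bij[of t] unfolding bij_betw_def by blast
  have c1: "\<forall>c\<in>Cs. length c = m \<and> distinct c"
    unfolding Cs_def C_def by (auto simp: distinct_map inj_on_def)
  have c2: "\<forall>c\<in>Cs. \<forall>d\<in>Cs. c \<noteq> d \<longrightarrow> set c \<inter> set d = {}"
  proof (intro ballI impI)
    fix c d assume "c \<in> Cs" "d \<in> Cs" "c \<noteq> d"
    then obtain i j where ij: "c = C i" "d = C j" "i < 4" "j < 4" "i \<noteq> j" unfolding Cs_def by auto
    show "set c \<inter> set d = {}"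
    proof (rule ccontr)
      assume "set c \<inter> set d \<noteq> {}"
      then have "set (C i) \<inter> set (C j) \<noteq> {}" using ij by simp
      then obtain t where "t < m" "P t i = P t j" unfolding setC by auto
      then show False using injP ij by blast
    qed
  qed
  have c3: "(\<Union>c\<in>Cs. set c) = lex_vertices (cycle_graph_vertices m) 4"
  proof (intro equalityI subsetI)
    fix x assume "x \<in> (\<Union>c\<in>Cs. set c)"
    then obtain i where "i < 4" "x \<in> set (C i)" unfolding Cs_def by auto
    then obtain t where "i < 4" "t < m" "x = (t, P t i)" unfolding setC by auto
    then show "x \<in> lex_vertices (cycle_graph_vertices m) 4"
      unfolding lex_vertices_def cycle_graph_vertices_def using Plt by auto
  next
    fix x assume "x \<in> lex_vertices (cycle_graph_vertices m) 4"
    then obtain t a where x: "x = (t,a)" "t < m" "a < 4"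
      unfolding lex_vertices_def cycle_graph_vertices_def by auto
    then obtain i where "i < 4" "P t i = a" using surjP by blast
    then have "x \<in> set (C i)" using x unfolding setC by auto
    then show "x \<in> (\<Union>c\<in>Cs. set c)" using \<open>i < 4\<close> unfolding Cs_def by auto
  qed
  have lceC: "list_cycle_edges (C i) = {E m s (P s i) (P (Suc s mod m) i) | s. s < m}" for i
  proof -
    have "list_cycle_edges (C i) = {{C i ! s, C i ! ((s + 1) mod m)} | s. s < m}"
      unfolding list_cycle_edges_def lenC by simp
    also have "\<dots> = {E m s (P s i) (P (Suc s mod m) i) | s. s < m}"
    proof -
      have "s < m \<Longrightarrow> {C i ! s, C i ! ((s + 1) mod m)} = E m s (P s i) (P (Suc s mod m) i)" for s
        using m3 by (simp add: nthC E_def)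
      then show ?thesis by blast
    qed
    finally show ?thesis .
  qed
  have c4: "FF m k = (\<Union>c\<in>Cs. list_cycle_edges c)"
  proof (intro equalityI subsetI)
    fix e assume "e \<in> FF m k"
    then obtain t a b where e: "e = E m t a b" "t < m" "a < 4" "b < 4" "cls m t a b = k"
      unfolding FF_def by blast
    then have b: "b = f t a" using clsf by blast
    obtain i where i: "i < 4" "P t i = a" using surjP e by blast
    then have "e = E m t (P t i) (P (Suc t mod m) i)" using e b step by simp
    then have "e \<in> list_cycle_edges (C i)" unfolding lceC using e(2) by blast
    then show "e \<in> (\<Union>c\<in>Cs. list_cycle_edges c)" using i unfolding Cs_def by blast
  next
    fix e assume "e \<in> (\<Union>c\<in>Cs. list_cycle_edges c)"
    then obtain i where "i < 4" "e \<in> list_cycle_edges (C i)" unfolding Cs_def by blast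
    then obtain s where e: "i < 4" "s < m" "e = E m s (P s i) (P (Suc s mod m) i)"
      unfolding lceC by blast
    have lt: "P (Suc s mod m) i < 4" using Plt e m3 by simp
    have "cls m s (P s i) (P (Suc s mod m) i) = k"
      using clsf[of s "P s i" "P (Suc s mod m) i"] step[of s i] Plt[of s i] e lt by simp
    moreover note lt
    ultimately show "e \<in> FF m k" using e Plt unfolding FF_def by blast
  qed
  show ?thesis unfolding is_Ck_factor_def
    apply (intro conjI m3 FF_sub[OF m3])
    apply (rule exI[of _ Cs])
    using c1 c2 c3 c4 by (intro conjI)
qed

definition sig :: "nat \<Rightarrow> nat" where "sig i = (if i = 1 then 2 else if i = 2 then 1 else i)"
definition tau :: "nat \<Rightarrow> nat" where "tau i = (if i = 0 then 3 else if i = 3 then 0 else i)"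
definition s13 :: "nat \<Rightarrow> nat" where "s13 i = (if i = 1 then 3 else if i = 3 then 1 else i)"
definition g0 :: "nat \<Rightarrow> nat" where "g0 i = [2,0,1,3] ! i"
definition g1 :: "nat \<Rightarrow> nat" where "g1 i = [1,2,3,0] ! i"
definition h1 :: "nat \<Rightarrow> nat" where "h1 i = [0,3,1,2] ! i"

definition P3 :: "nat \<Rightarrow> nat \<Rightarrow> nat \<Rightarrow> nat" where
  "P3 m t i = (if odd m \<and> t = m - 1 then s13 (sig i) else if even t then i else sig i)"
definition f3 :: "nat \<Rightarrow> nat \<Rightarrow> nat \<Rightarrow> nat" where
  "f3 m t a = (if odd m \<and> t = m - 2 then s13 a else if odd m \<and> t = m - 1 then h1 a else sig a)"
definition P4 :: "nat \<Rightarrow> nat \<Rightarrow> nat \<Rightarrow> nat" where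
  "P4 m t i = (if odd m \<and> t = m - 1 then g0 (tau i) else if even t then i else tau i)"
definition f4 :: "nat \<Rightarrow> nat \<Rightarrow> nat \<Rightarrow> nat" where
  "f4 m t a = (if odd m \<and> t = m - 2 then g0 a else if odd m \<and> t = m - 1 then g1 a else tau a)"

lemma bij4:
  fixes g :: "nat \<Rightarrow> nat"
  assumes "\<And>i. i < 4 \<Longrightarrow> g i < (4::nat)" "inj_on g {..<4}"
  shows "bij_betw g {..<4} {..<4}"
proof -
  have "g ` {..<4} \<subseteq> {..<4}" using assms(1) by auto
  then have "g ` {..<4} = {..<4}" using endo_inj_surj[of "{..<4::nat}" g] assms(2) by simp
  then show ?thesis using assms(2) unfolding bij_betw_def by simp
qed

lemma P3_bij: "bij_betw (P3 m t) {..<4} {..<4}"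
  by (rule bij4) (auto simp: P3_def sig_def s13_def inj_on_def less4)

lemma P4_bij: "bij_betw (P4 m t) {..<4} {..<4}"
  by (rule bij4) (auto simp: P4_def tau_def g0_def inj_on_def less4)

lemma odd_ne: "m \<ge> 3 \<Longrightarrow> t < m - 1 \<Longrightarrow> odd m \<Longrightarrow> t \<noteq> m - 2 \<Longrightarrow> Suc t \<noteq> m - 1" by arith

lemma P3_step:
  assumes "m \<ge> 3" "t < m" "i < 4"
  shows "P3 m (Suc t mod m) i = f3 m t (P3 m t i)"
proof (cases "t = m - 1")
  case True
  then have S0: "Suc t mod m = 0" using assms by simp
  have "0 \<noteq> m - 1" using assms by simp
  then have L: "P3 m (Suc t mod m) i = i" unfolding S0 P3_def by simp
  have "f3 m t (P3 m t i) = i"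
  proof (cases "odd m")
    case True
    then have "t \<noteq> m - 2" using \<open>t = m - 1\<close> assms by simp
    then have "f3 m t (P3 m t i) = h1 (s13 (sig i))" using True \<open>t = m - 1\<close> unfolding P3_def f3_def by simp
    then show ?thesis using assms(3) unfolding less4 by (auto simp: sig_def s13_def h1_def)
  next
    case False
    then have "odd t" using \<open>t = m - 1\<close> assms by simp
    then have "f3 m t (P3 m t i) = sig (sig i)" using False unfolding P3_def f3_def by simp
    then show ?thesis using assms(3) unfolding less4 by (auto simp: sig_def s13_def h1_def)
  qed
  then show ?thesis using L by simp
next
  case False
  then have S: "Suc t mod m = Suc t" using assms by simp
  show ?thesis
  proof (cases "odd m \<and> t = m - 2")
    case True
    then have "odd t" "Suc t = m - 1" using assms by (auto simp: True)
    then show ?thesis using True S unfolding P3_def f3_def by simp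
  next
    case F2: False
    then have "\<not> (odd m \<and> Suc t = m - 1)" using False assms by auto
    then show ?thesis using S F2 False unfolding P3_def f3_def by (auto simp: sig_def)
  qed
qed

lemma P4_step:
  assumes "m \<ge> 3" "t < m" "i < 4"
  shows "P4 m (Suc t mod m) i = f4 m t (P4 m t i)"
proof (cases "t = m - 1")
  case True
  then have S0: "Suc t mod m = 0" using assms by simp
  have "0 \<noteq> m - 1" using assms by simp
  then have L: "P4 m (Suc t mod m) i = i" unfolding S0 P4_def by simp
  have "f4 m t (P4 m t i) = i"
  proof (cases "odd m")
    case True
    then have "t \<noteq> m - 2" using \<open>t = m - 1\<close> assms by simp
    then have "f4 m t (P4 m t i) = g1 (g0 (tau i))" using True \<open>t = m - 1\<close> unfolding P4_def f4_def by simp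
    then show ?thesis using assms(3) unfolding less4 by (auto simp: tau_def g0_def g1_def)
  next
    case False
    then have "odd t" using \<open>t = m - 1\<close> assms by simp
    then have "f4 m t (P4 m t i) = tau (tau i)" using False unfolding P4_def f4_def by simp
    then show ?thesis using assms(3) unfolding less4 by (auto simp: tau_def g0_def g1_def)
  qed
  then show ?thesis using L by simp
next
  case False
  then have S: "Suc t mod m = Suc t" using assms by simp
  show ?thesis
  proof (cases "odd m \<and> t = m - 2")
    case True
    then have "odd t" "Suc t = m - 1" using assms by (auto simp: True)
    then show ?thesis using True S unfolding P4_def f4_def by simp
  next
    case F2: False
    then have "\<not> (odd m \<and> Suc t = m - 1)" using False assms by auto
    then show ?thesis using S F2 False unfolding P4_def f4_def by (auto simp: tau_def)
  qed
qed

lemma tB2: "a < 4 \<Longrightarrow> b < 4 \<Longrightarrow> (tabB a b = 2) = (b = sig a)"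
  unfolding less4 by (elim disjE) (simp_all add: tabB_def sig_def)
lemma t02: "a < 4 \<Longrightarrow> b < 4 \<Longrightarrow> (tab0 a b = 2) = (b = s13 a)"
  unfolding less4 by (elim disjE) (simp_all add: tab0_def s13_def)
lemma t12: "a < 4 \<Longrightarrow> b < 4 \<Longrightarrow> (tab1 a b = 2) = (b = h1 a)"
  unfolding less4 by (elim disjE) (simp_all add: tab1_def h1_def)
lemma tB3: "a < 4 \<Longrightarrow> b < 4 \<Longrightarrow> (tabB a b = 3) = (b = tau a)"
  unfolding less4 by (elim disjE) (simp_all add: tabB_def tau_def)
lemma t03: "a < 4 \<Longrightarrow> b < 4 \<Longrightarrow> (tab0 a b = 3) = (b = g0 a)"
  unfolding less4 by (elim disjE) (simp_all add: tab0_def g0_def)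
lemma t13: "a < 4 \<Longrightarrow> b < 4 \<Longrightarrow> (tab1 a b = 3) = (b = g1 a)"
  unfolding less4 by (elim disjE) (simp_all add: tab1_def g1_def)

lemma cls3: "a < 4 \<Longrightarrow> b < 4 \<Longrightarrow> (cls m t a b = 2) = (b = f3 m t a)"
  unfolding cls_def f3_def by (simp add: tB2 t02 t12)

lemma cls4: "a < 4 \<Longrightarrow> b < 4 \<Longrightarrow> (cls m t a b = 3) = (b = f4 m t a)"
  unfolding cls_def f4_def by (simp add: tB3 t03 t13)

lemma F3_factor: "m \<ge> 3 \<Longrightarrow> is_Ck_factor m (lex_vertices (cycle_graph_vertices m) 4) (lex_edges (cycle_graph_edges m) 4) (FF m 2)"
  by (rule vert[where P = "P3 m" and f = "f3 m"]) (auto simp: P3_bij P3_step cls3)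

lemma F4_factor: "m \<ge> 3 \<Longrightarrow> is_Ck_factor m (lex_vertices (cycle_graph_vertices m) 4) (lex_edges (cycle_graph_edges m) 4) (FF m 3)"
  by (rule vert[where P = "P4 m" and f = "f4 m"]) (auto simp: P4_bij P4_step cls4)

lemma tB0: "a < 4 \<Longrightarrow> b < 4 \<Longrightarrow> (tabB a b = 0) = ((a = 0 \<or> a = 3) \<and> (b = 1 \<or> b = 2))"
  unfolding less4 by (elim disjE) (simp_all add: tabB_def)
lemma t00: "a < 4 \<Longrightarrow> b < 4 \<Longrightarrow> (tab0 a b = 0) = ((a = 0 \<and> b = 1) \<or> (a = 0 \<and> b = 3) \<or> (a = 3 \<and> b = 0) \<or> (a = 3 \<and> b = 2))"
  unfolding less4 by (elim disjE) (simp_all add: tab0_def)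
lemma t10: "a < 4 \<Longrightarrow> b < 4 \<Longrightarrow> (tab1 a b = 0) = ((a = 0 \<and> b = 2) \<or> (a = 1 \<and> b = 1) \<or> (a = 2 \<and> b = 2) \<or> (a = 3 \<and> b = 1))"
  unfolding less4 by (elim disjE) (simp_all add: tab1_def)
lemma tB1: "a < 4 \<Longrightarrow> b < 4 \<Longrightarrow> (tabB a b = 1) = ((a = 1 \<or> a = 2) \<and> (b = 0 \<or> b = 3))"
  unfolding less4 by (elim disjE) (simp_all add: tabB_def)
lemma t01: "a < 4 \<Longrightarrow> b < 4 \<Longrightarrow> (tab0 a b = 1) = ((a = 1 \<and> b = 1) \<or> (a = 1 \<and> b = 2) \<or> (a = 2 \<and> b = 0) \<or> (a = 2 \<and> b = 3))"
  unfolding less4 by (elim disjE) (simp_all add: tab0_def)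
lemma t11: "a < 4 \<Longrightarrow> b < 4 \<Longrightarrow> (tab1 a b = 1) = ((a = 1 \<and> b = 0) \<or> (a = 2 \<and> b = 0) \<or> (a = 0 \<and> b = 3) \<or> (a = 3 \<and> b = 3))"
  unfolding less4 by (elim disjE) (simp_all add: tab1_def)

lemma clsB: assumes "\<not> (odd m \<and> t = m - 2)" "\<not> (odd m \<and> t = m - 1)" shows "cls m t a b = tabB a b"
  unfolding cls_def by (simp only: if_not_P[OF assms(1)] if_not_P[OF assms(2)])
lemma cls0: assumes "odd m \<and> t = m - 2" shows "cls m t a b = tab0 a b"
  unfolding cls_def by (simp only: if_P[OF assms])
lemma cls1: assumes "odd m" "m \<ge> 3" "t = m - 1" shows "cls m t a b = tab1 a b"
proof -
  have A: "\<not> (odd m \<and> t = m - 2)" using assms by auto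
  have B: "odd m \<and> t = m - 1" using assms by auto
  show ?thesis unfolding cls_def by (simp only: if_not_P[OF A] if_P[OF B])
qed

lemma inFF: "t < m \<Longrightarrow> a < 4 \<Longrightarrow> b < 4 \<Longrightarrow> cls m t a b = k \<Longrightarrow> E m t a b \<in> FF m k"
  unfolding FF_def by blast

lemma FF_E: "e \<in> FF m k \<Longrightarrow> \<exists>t a b. e = E m t a b \<and> t < m \<and> a < 4 \<and> b < 4 \<and> cls m t a b = k"
  unfolding FF_def by blast

lemma Smod_inj: "u < m \<Longrightarrow> v < m \<Longrightarrow> Suc u mod m = Suc v mod m \<Longrightarrow> u = v"
  by (metis Suc_mod_cases Suc_inject diff_Suc_1 nat.distinct(1))

lemma Smod_pred: "w < m \<Longrightarrow> \<exists>u<m. Suc u mod m = w"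
proof (cases w)
  case 0
  assume "w < m"
  then show ?thesis using 0 by (intro exI[of _ "m - 1"]) simp
next
  case (Suc v)
  assume "w < m"
  then show ?thesis using Suc by (intro exI[of _ v]) simp
qed

lemma c4fac:
  assumes m3: "m \<ge> 3"
    and c1: "\<forall>c\<in>Cs. length c = 4 \<and> distinct c"
    and c2: "\<forall>c\<in>Cs. \<forall>d\<in>Cs. c \<noteq> d \<longrightarrow> set c \<inter> set d = {}"
    and c3: "(\<Union>c\<in>Cs. set c) = lex_vertices (cycle_graph_vertices m) 4"
    and c4: "FF m k = (\<Union>c\<in>Cs. list_cycle_edges c)"
  shows "is_Ck_factor 4 (lex_vertices (cycle_graph_vertices m) 4) (lex_edges (cycle_graph_edges m) 4) (FF m k)"
  unfolding is_Ck_factor_def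
  apply (intro conjI FF_sub[OF m3])
   apply simp
  apply (rule exI[of _ Cs])
  using c1 c2 c3 c4 by (intro conjI)

lemma lexV: "lex_vertices (cycle_graph_vertices m) 4 = {(w,i). w < m \<and> i < 4}"
  unfolding lex_vertices_def cycle_graph_vertices_def by auto

definition PC1 :: "nat \<Rightarrow> nat \<Rightarrow> (nat \<times> nat) list" where
  "PC1 m u = [(u,0),(Suc u mod m,1),(u,3),(Suc u mod m,2)]"

lemma ins2: "{x,y} = {y,x}" by auto

lemma lce_PC1: "list_cycle_edges (PC1 m u) = {E m u 0 1, E m u 3 1, E m u 3 2, E m u 0 2}"
  unfolding PC1_def lce4 E_def by (simp add: ins2[of "(Suc u mod m, _)"])

lemma set_PC1: "set (PC1 m u) = {(u,0),(u,3),(Suc u mod m,1),(Suc u mod m,2)}"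
  unfolding PC1_def by auto

lemma F1_even:
  assumes m3: "m \<ge> 3" and ev: "even m"
  shows "is_Ck_factor 4 (lex_vertices (cycle_graph_vertices m) 4) (lex_edges (cycle_graph_edges m) 4) (FF m 0)"
proof (rule c4fac[OF m3, where Cs = "PC1 m ` {..<m}"])
  have cB: "cls m t a b = tabB a b" for t a b using ev by (simp add: clsB)
  show "\<forall>c\<in>PC1 m ` {..<m}. length c = 4 \<and> distinct c" by (auto simp: PC1_def)
  show "\<forall>c\<in>PC1 m ` {..<m}. \<forall>d\<in>PC1 m ` {..<m}. c \<noteq> d \<longrightarrow> set c \<inter> set d = {}"
  proof (intro ballI impI)
    fix c d assume "c \<in> PC1 m ` {..<m}" "d \<in> PC1 m ` {..<m}" "c \<noteq> d"
    then obtain u v where uv: "c = PC1 m u" "d = PC1 m v" "u < m" "v < m" "u \<noteq> v" by auto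
    then have "Suc u mod m \<noteq> Suc v mod m" using Smod_inj by blast
    then show "set c \<inter> set d = {}" using uv by (auto simp: set_PC1)
  qed
  show "(\<Union>c\<in>PC1 m ` {..<m}. set c) = lex_vertices (cycle_graph_vertices m) 4"
  proof (intro equalityI subsetI)
    fix x assume "x \<in> (\<Union>c\<in>PC1 m ` {..<m}. set c)"
    then obtain u where "u < m" "x \<in> set (PC1 m u)" by auto
    then show "x \<in> lex_vertices (cycle_graph_vertices m) 4" using m3
      unfolding lexV set_PC1 by auto
  next
    fix x assume "x \<in> lex_vertices (cycle_graph_vertices m) 4"
    then obtain w i where x: "x = (w,i)" "w < m" "i < 4" unfolding lexV by auto
    obtain u where u: "u < m" "Suc u mod m = w" using Smod_pred x by blast
    have "x \<in> set (PC1 m w) \<or> x \<in> set (PC1 m u)" using x u unfolding set_PC1 less4 by auto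
    then show "x \<in> (\<Union>c\<in>PC1 m ` {..<m}. set c)" using x u by auto
  qed
  show "FF m 0 = (\<Union>c\<in>PC1 m ` {..<m}. list_cycle_edges c)"
  proof (intro equalityI subsetI)
    fix e assume "e \<in> FF m 0"
    then obtain t a b where e: "e = E m t a b" "t < m" "a < 4" "b < 4" "tabB a b = 0"
      using FF_E cB by metis
    then have "e \<in> list_cycle_edges (PC1 m t)" unfolding lce_PC1 using tB0[of a b] by auto
    then show "e \<in> (\<Union>c\<in>PC1 m ` {..<m}. list_cycle_edges c)" using e by auto
  next
    fix e assume "e \<in> (\<Union>c\<in>PC1 m ` {..<m}. list_cycle_edges c)"
    then obtain u where "u < m" "e \<in> list_cycle_edges (PC1 m u)" by auto
    then show "e \<in> FF m 0" unfolding lce_PC1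
      by (auto intro!: inFF simp: cB tabB_def)
  qed
qed

definition Za1 :: "nat \<Rightarrow> (nat \<times> nat) list" where
  "Za1 m = [(m-2,0),(m-1,1),(0,1),(m-1,3)]"
definition Zb1 :: "nat \<Rightarrow> (nat \<times> nat) list" where
  "Zb1 m = [(m-2,3),(m-1,0),(0,2),(m-1,2)]"

lemma hm: assumes "m \<ge> 3" shows "Suc (m-2) mod m = m - 1" "Suc (m-1) mod m = 0" "Suc (m - 2) = m - 1"
  using assms by auto

lemma set_PC1': "u < m - 2 \<Longrightarrow> set (PC1 m u) = {(u,0),(u,3),(Suc u,1),(Suc u,2)}"
  unfolding set_PC1 by simp

lemma F1_odd:
  assumes m3: "m \<ge> 3" and od: "odd m"
  shows "is_Ck_factor 4 (lex_vertices (cycle_graph_vertices m) 4) (lex_edges (cycle_graph_edges m) 4) (FF m 0)"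
proof (rule c4fac[OF m3, where Cs = "PC1 m ` {..<m-2} \<union> {Za1 m, Zb1 m}"])
  note h = hm[OF m3]
  have h2: "(m - Suc 0) mod m = m - Suc 0" "(m - 2) mod m = m - 2" using m3 by simp_all
  have cB: "t < m - 2 \<Longrightarrow> cls m t a b = tabB a b" for t a b by (rule clsB) auto
  have c0: "cls m (m-2) a b = tab0 a b" for a b using od by (intro cls0) simp
  have c1: "cls m (m-1) a b = tab1 a b" for a b using od m3 by (intro cls1) simp_all
  have c1': "cls m (m - Suc 0) a b = tab1 a b" for a b using c1 by simp
  show "\<forall>c\<in>PC1 m ` {..<m-2} \<union> {Za1 m, Zb1 m}. length c = 4 \<and> distinct c"
    using m3 by (auto simp: PC1_def Za1_def Zb1_def)
  have PZa: "u < m - 2 \<Longrightarrow> set (PC1 m u) \<inter> set (Za1 m) = {}" for u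
    by (auto simp: set_PC1' Za1_def)
  have PZb: "u < m - 2 \<Longrightarrow> set (PC1 m u) \<inter> set (Zb1 m) = {}" for u
    by (auto simp: set_PC1' Zb1_def)
  have ZZ: "set (Za1 m) \<inter> set (Zb1 m) = {}" using m3 by (auto simp: Za1_def Zb1_def)
  have PP: "u < m - 2 \<Longrightarrow> v < m - 2 \<Longrightarrow> PC1 m u \<noteq> PC1 m v \<Longrightarrow> set (PC1 m u) \<inter> set (PC1 m v) = {}" for u v
    by (cases "u = v") (auto simp: set_PC1')
  show "\<forall>c\<in>PC1 m ` {..<m-2} \<union> {Za1 m, Zb1 m}. \<forall>d\<in>PC1 m ` {..<m-2} \<union> {Za1 m, Zb1 m}. c \<noteq> d \<longrightarrow> set c \<inter> set d = {}"
    using PZa PZb ZZ PP by (auto simp: Int_commute)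
  show "(\<Union>c\<in>PC1 m ` {..<m-2} \<union> {Za1 m, Zb1 m}. set c) = lex_vertices (cycle_graph_vertices m) 4"
  proof (intro equalityI subsetI)
    fix x assume "x \<in> (\<Union>c\<in>PC1 m ` {..<m-2} \<union> {Za1 m, Zb1 m}. set c)"
    then consider u where "u < m - 2" "x \<in> set (PC1 m u)" | "x \<in> set (Za1 m)" | "x \<in> set (Zb1 m)" by auto
    then show "x \<in> lex_vertices (cycle_graph_vertices m) 4" unfolding lexV
      by cases (use m3 in \<open>auto simp: set_PC1' Za1_def Zb1_def\<close>)
  next
    fix x assume "x \<in> lex_vertices (cycle_graph_vertices m) 4"
    then obtain w i where x: "x = (w,i)" "w < m" "i < 4" unfolding lexV by auto
    have "x \<in> set (Za1 m) \<or> x \<in> set (Zb1 m) \<or> (\<exists>u<m-2. x \<in> set (PC1 m u))"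
    proof -
      consider "w = m - 1" | "w = m - 2" | "w = 0" | "0 < w" "w < m - 2" using x m3 by linarith
      then show ?thesis
      proof cases
        case 1 then show ?thesis using x(3) unfolding less4 x(1) by (auto simp: Za1_def Zb1_def)
      next
        case 2
        have "m - 3 < m - 2" "Suc (m - 3) = m - 2" using m3 by auto
        then have "(m-2,1) \<in> set (PC1 m (m-3))" "(m-2,2) \<in> set (PC1 m (m-3))"
          by (simp_all only: set_PC1') auto
        then show ?thesis using x(3) \<open>m - 3 < m - 2\<close> unfolding less4 x(1) 2
          by (auto simp: Za1_def Zb1_def)
      next
        case 3
        have "0 < m - 2" using m3 by simp
        then have "(0,0) \<in> set (PC1 m 0)" "(0,3) \<in> set (PC1 m 0)" by (auto simp: set_PC1')
        then show ?thesis using x(3) \<open>0 < m - 2\<close> unfolding less4 x(1) 3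
          by (auto simp: Za1_def Zb1_def)
      next
        case 4
        have "w - 1 < m - 2" "Suc (w - 1) = w" using 4 by auto
        then have "(w,1) \<in> set (PC1 m (w-1))" "(w,2) \<in> set (PC1 m (w-1))"
          "(w,0) \<in> set (PC1 m w)" "(w,3) \<in> set (PC1 m w)"
          using 4 by (auto simp: set_PC1')
        then show ?thesis using x(3) \<open>w - 1 < m - 2\<close> 4 unfolding less4 x(1)
          by blast
      qed
    qed
    then show "x \<in> (\<Union>c\<in>PC1 m ` {..<m-2} \<union> {Za1 m, Zb1 m}. set c)" by auto
  qed
  have lZa: "list_cycle_edges (Za1 m) \<subseteq> {E m (m-2) 0 1, E m (m-1) 1 1, E m (m-1) 3 1, E m (m-2) 0 3}"
    unfolding Za1_def lce4 E_def h by (auto simp: doubleton_eq_iff h2)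
  have lZb: "list_cycle_edges (Zb1 m) \<subseteq> {E m (m-2) 3 0, E m (m-1) 0 2, E m (m-1) 2 2, E m (m-2) 3 2}"
    unfolding Zb1_def lce4 E_def h by (auto simp: doubleton_eq_iff h2)
  have lZa': "{E m (m-2) 0 1, E m (m-1) 1 1, E m (m-1) 3 1, E m (m-2) 0 3} \<subseteq> list_cycle_edges (Za1 m)"
    unfolding Za1_def lce4 E_def h by (auto simp: doubleton_eq_iff h2)
  have lZb': "{E m (m-2) 3 0, E m (m-1) 0 2, E m (m-1) 2 2, E m (m-2) 3 2} \<subseteq> list_cycle_edges (Zb1 m)"
    unfolding Zb1_def lce4 E_def h by (auto simp: doubleton_eq_iff h2)
  have mm: "m - 2 < m" "m - 1 < m" using m3 by auto
  show "FF m 0 = (\<Union>c\<in>PC1 m ` {..<m-2} \<union> {Za1 m, Zb1 m}. list_cycle_edges c)"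
  proof (intro equalityI subsetI)
    fix e assume "e \<in> FF m 0"
    then obtain t a b where e: "e = E m t a b" "t < m" "a < 4" "b < 4" "cls m t a b = 0"
      using FF_E by metis
    consider "t < m - 2" | "t = m - 2" | "t = m - 1" using e(2) by linarith
    then have "e \<in> list_cycle_edges (Za1 m) \<or> e \<in> list_cycle_edges (Zb1 m) \<or> (\<exists>u<m-2. e \<in> list_cycle_edges (PC1 m u))"
    proof cases
      case 1
      then have "tabB a b = 0" using e cB by simp
      then have "e \<in> list_cycle_edges (PC1 m t)" unfolding lce_PC1 e(1) using tB0[OF e(3,4)] by auto
      then show ?thesis using 1 by blast
    next
      case 2
      then have "tab0 a b = 0" using e c0 by simp
      then show ?thesis using t00[OF e(3,4)] lZa' lZb' unfolding e(1) 2 by auto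
    next
      case 3
      then have "tab1 a b = 0" using e c1 by simp
      then show ?thesis using t10[OF e(3,4)] lZa' lZb' unfolding e(1) 3 by auto
    qed
    then show "e \<in> (\<Union>c\<in>PC1 m ` {..<m-2} \<union> {Za1 m, Zb1 m}. list_cycle_edges c)" by auto
  next
    fix e assume "e \<in> (\<Union>c\<in>PC1 m ` {..<m-2} \<union> {Za1 m, Zb1 m}. list_cycle_edges c)"
    then consider u where "u < m - 2" "e \<in> list_cycle_edges (PC1 m u)"
      | "e \<in> list_cycle_edges (Za1 m)" | "e \<in> list_cycle_edges (Zb1 m)" by auto
    then show "e \<in> FF m 0"
    proof cases
      case 1 then show ?thesis unfolding lce_PC1
        by (auto intro!: inFF simp: cB tabB_def)
    next
      case 2
      have "{E m (m-2) 0 1, E m (m-1) 1 1, E m (m-1) 3 1, E m (m-2) 0 3} \<subseteq> FF m 0"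
        using mm by (auto intro!: inFF simp: c0 c1 c1' tab0_def tab1_def)
      then show ?thesis using 2 lZa by blast
    next
      case 3
      have "{E m (m-2) 3 0, E m (m-1) 0 2, E m (m-1) 2 2, E m (m-2) 3 2} \<subseteq> FF m 0"
        using mm by (auto intro!: inFF simp: c0 c1 c1' tab0_def tab1_def)
      then show ?thesis using 3 lZb by blast
    qed
  qed
qed

definition PC2 :: "nat \<Rightarrow> nat \<Rightarrow> (nat \<times> nat) list" where
  "PC2 m u = [(u,1),(Suc u mod m,0),(u,2),(Suc u mod m,3)]"

lemma lce_PC2: "list_cycle_edges (PC2 m u) = {E m u 1 0, E m u 2 0, E m u 2 3, E m u 1 3}"
  unfolding PC2_def lce4 E_def by (simp add: ins2[of "(Suc u mod m, _)"])

lemma set_PC2: "set (PC2 m u) = {(u,1),(u,2),(Suc u mod m,0),(Suc u mod m,3)}"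
  unfolding PC2_def by auto

lemma F2_even:
  assumes m3: "m \<ge> 3" and ev: "even m"
  shows "is_Ck_factor 4 (lex_vertices (cycle_graph_vertices m) 4) (lex_edges (cycle_graph_edges m) 4) (FF m 1)"
proof (rule c4fac[OF m3, where Cs = "PC2 m ` {..<m}"])
  have cB: "cls m t a b = tabB a b" for t a b using ev by (simp add: clsB)
  show "\<forall>c\<in>PC2 m ` {..<m}. length c = 4 \<and> distinct c" by (auto simp: PC2_def)
  show "\<forall>c\<in>PC2 m ` {..<m}. \<forall>d\<in>PC2 m ` {..<m}. c \<noteq> d \<longrightarrow> set c \<inter> set d = {}"
  proof (intro ballI impI)
    fix c d assume "c \<in> PC2 m ` {..<m}" "d \<in> PC2 m ` {..<m}" "c \<noteq> d"
    then obtain u v where uv: "c = PC2 m u" "d = PC2 m v" "u < m" "v < m" "u \<noteq> v" by auto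
    then have "Suc u mod m \<noteq> Suc v mod m" using Smod_inj by blast
    then show "set c \<inter> set d = {}" using uv by (auto simp: set_PC2)
  qed
  show "(\<Union>c\<in>PC2 m ` {..<m}. set c) = lex_vertices (cycle_graph_vertices m) 4"
  proof (intro equalityI subsetI)
    fix x assume "x \<in> (\<Union>c\<in>PC2 m ` {..<m}. set c)"
    then obtain u where "u < m" "x \<in> set (PC2 m u)" by auto
    then show "x \<in> lex_vertices (cycle_graph_vertices m) 4" using m3
      unfolding lexV set_PC2 by auto
  next
    fix x assume "x \<in> lex_vertices (cycle_graph_vertices m) 4"
    then obtain w i where x: "x = (w,i)" "w < m" "i < 4" unfolding lexV by auto
    obtain u where u: "u < m" "Suc u mod m = w" using Smod_pred x by blast
    have "x \<in> set (PC2 m w) \<or> x \<in> set (PC2 m u)" using x u unfolding set_PC2 less4 by auto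
    then show "x \<in> (\<Union>c\<in>PC2 m ` {..<m}. set c)" using x u by auto
  qed
  show "FF m 1 = (\<Union>c\<in>PC2 m ` {..<m}. list_cycle_edges c)"
  proof (intro equalityI subsetI)
    fix e assume "e \<in> FF m 1"
    then obtain t a b where e: "e = E m t a b" "t < m" "a < 4" "b < 4" "tabB a b = 1"
      using FF_E cB by metis
    then have "e \<in> list_cycle_edges (PC2 m t)" unfolding lce_PC2 using tB1[of a b] by auto
    then show "e \<in> (\<Union>c\<in>PC2 m ` {..<m}. list_cycle_edges c)" using e by auto
  next
    fix e assume "e \<in> (\<Union>c\<in>PC2 m ` {..<m}. list_cycle_edges c)"
    then obtain u where "u < m" "e \<in> list_cycle_edges (PC2 m u)" by auto
    then show "e \<in> FF m 1" unfolding lce_PC2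
      by (auto intro!: inFF simp: cB tabB_def)
  qed
qed

definition Za2 :: "nat \<Rightarrow> (nat \<times> nat) list" where
  "Za2 m = [(m-2,1),(m-1,1),(0,0),(m-1,2)]"
definition Zb2 :: "nat \<Rightarrow> (nat \<times> nat) list" where
  "Zb2 m = [(m-2,2),(m-1,0),(0,3),(m-1,3)]"

lemma set_PC2': "u < m - 2 \<Longrightarrow> set (PC2 m u) = {(u,1),(u,2),(Suc u,0),(Suc u,3)}"
  unfolding set_PC2 by simp

lemma F2_odd:
  assumes m3: "m \<ge> 3" and od: "odd m"
  shows "is_Ck_factor 4 (lex_vertices (cycle_graph_vertices m) 4) (lex_edges (cycle_graph_edges m) 4) (FF m 1)"
proof (rule c4fac[OF m3, where Cs = "PC2 m ` {..<m-2} \<union> {Za2 m, Zb2 m}"])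
  note h = hm[OF m3]
  have h2: "(m - Suc 0) mod m = m - Suc 0" "(m - 2) mod m = m - 2" using m3 by simp_all
  have cB: "t < m - 2 \<Longrightarrow> cls m t a b = tabB a b" for t a b by (rule clsB) auto
  have c0: "cls m (m-2) a b = tab0 a b" for a b using od by (intro cls0) simp
  have c1: "cls m (m-1) a b = tab1 a b" for a b using od m3 by (intro cls1) simp_all
  have c1': "cls m (m - Suc 0) a b = tab1 a b" for a b using c1 by simp
  show "\<forall>c\<in>PC2 m ` {..<m-2} \<union> {Za2 m, Zb2 m}. length c = 4 \<and> distinct c"
    using m3 by (auto simp: PC2_def Za2_def Zb2_def)
  have PZa: "u < m - 2 \<Longrightarrow> set (PC2 m u) \<inter> set (Za2 m) = {}" for u
    by (auto simp: set_PC2' Za2_def)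
  have PZb: "u < m - 2 \<Longrightarrow> set (PC2 m u) \<inter> set (Zb2 m) = {}" for u
    by (auto simp: set_PC2' Zb2_def)
  have ZZ: "set (Za2 m) \<inter> set (Zb2 m) = {}" using m3 by (auto simp: Za2_def Zb2_def)
  have PP: "u < m - 2 \<Longrightarrow> v < m - 2 \<Longrightarrow> PC2 m u \<noteq> PC2 m v \<Longrightarrow> set (PC2 m u) \<inter> set (PC2 m v) = {}" for u v
    by (cases "u = v") (auto simp: set_PC2')
  show "\<forall>c\<in>PC2 m ` {..<m-2} \<union> {Za2 m, Zb2 m}. \<forall>d\<in>PC2 m ` {..<m-2} \<union> {Za2 m, Zb2 m}. c \<noteq> d \<longrightarrow> set c \<inter> set d = {}"
    using PZa PZb ZZ PP by (auto simp: Int_commute)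
  show "(\<Union>c\<in>PC2 m ` {..<m-2} \<union> {Za2 m, Zb2 m}. set c) = lex_vertices (cycle_graph_vertices m) 4"
  proof (intro equalityI subsetI)
    fix x assume "x \<in> (\<Union>c\<in>PC2 m ` {..<m-2} \<union> {Za2 m, Zb2 m}. set c)"
    then consider u where "u < m - 2" "x \<in> set (PC2 m u)" | "x \<in> set (Za2 m)" | "x \<in> set (Zb2 m)" by auto
    then show "x \<in> lex_vertices (cycle_graph_vertices m) 4" unfolding lexV
      by cases (use m3 in \<open>auto simp: set_PC2' Za2_def Zb2_def\<close>)
  next
    fix x assume "x \<in> lex_vertices (cycle_graph_vertices m) 4"
    then obtain w i where x: "x = (w,i)" "w < m" "i < 4" unfolding lexV by auto
    have "x \<in> set (Za2 m) \<or> x \<in> set (Zb2 m) \<or> (\<exists>u<m-2. x \<in> set (PC2 m u))"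
    proof -
      consider "w = m - 1" | "w = m - 2" | "w = 0" | "0 < w" "w < m - 2" using x m3 by linarith
      then show ?thesis
      proof cases
        case 1 then show ?thesis using x(3) unfolding less4 x(1) by (auto simp: Za2_def Zb2_def)
      next
        case 2
        have "m - 3 < m - 2" "Suc (m - 3) = m - 2" using m3 by auto
        then have "(m-2,0) \<in> set (PC2 m (m-3))" "(m-2,3) \<in> set (PC2 m (m-3))"
          by (simp_all only: set_PC2') auto
        then show ?thesis using x(3) \<open>m - 3 < m - 2\<close> unfolding less4 x(1) 2
          by (auto simp: Za2_def Zb2_def)
      next
        case 3
        have "0 < m - 2" using m3 by simp
        then have "(0,1) \<in> set (PC2 m 0)" "(0,2) \<in> set (PC2 m 0)" by (auto simp: set_PC2')
        then show ?thesis using x(3) \<open>0 < m - 2\<close> unfolding less4 x(1) 3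
          by (auto simp: Za2_def Zb2_def)
      next
        case 4
        have "w - 1 < m - 2" "Suc (w - 1) = w" using 4 by auto
        then have "(w,0) \<in> set (PC2 m (w-1))" "(w,3) \<in> set (PC2 m (w-1))"
          "(w,1) \<in> set (PC2 m w)" "(w,2) \<in> set (PC2 m w)"
          using 4 by (auto simp: set_PC2')
        then show ?thesis using x(3) \<open>w - 1 < m - 2\<close> 4 unfolding less4 x(1)
          by blast
      qed
    qed
    then show "x \<in> (\<Union>c\<in>PC2 m ` {..<m-2} \<union> {Za2 m, Zb2 m}. set c)" by auto
  qed
  have lZa: "list_cycle_edges (Za2 m) \<subseteq> {E m (m-2) 1 1, E m (m-1) 1 0, E m (m-1) 2 0, E m (m-2) 1 2}"
    unfolding Za2_def lce4 E_def h by (auto simp: doubleton_eq_iff h2)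
  have lZb: "list_cycle_edges (Zb2 m) \<subseteq> {E m (m-2) 2 0, E m (m-1) 0 3, E m (m-1) 3 3, E m (m-2) 2 3}"
    unfolding Zb2_def lce4 E_def h by (auto simp: doubleton_eq_iff h2)
  have lZa': "{E m (m-2) 1 1, E m (m-1) 1 0, E m (m-1) 2 0, E m (m-2) 1 2} \<subseteq> list_cycle_edges (Za2 m)"
    unfolding Za2_def lce4 E_def h by (auto simp: doubleton_eq_iff h2)
  have lZb': "{E m (m-2) 2 0, E m (m-1) 0 3, E m (m-1) 3 3, E m (m-2) 2 3} \<subseteq> list_cycle_edges (Zb2 m)"
    unfolding Zb2_def lce4 E_def h by (auto simp: doubleton_eq_iff h2)
  have mm: "m - 2 < m" "m - 1 < m" using m3 by auto
  show "FF m 1 = (\<Union>c\<in>PC2 m ` {..<m-2} \<union> {Za2 m, Zb2 m}. list_cycle_edges c)"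
  proof (intro equalityI subsetI)
    fix e assume "e \<in> FF m 1"
    then obtain t a b where e: "e = E m t a b" "t < m" "a < 4" "b < 4" "cls m t a b = 1"
      using FF_E by metis
    consider "t < m - 2" | "t = m - 2" | "t = m - 1" using e(2) by linarith
    then have "e \<in> list_cycle_edges (Za2 m) \<or> e \<in> list_cycle_edges (Zb2 m) \<or> (\<exists>u<m-2. e \<in> list_cycle_edges (PC2 m u))"
    proof cases
      case 1
      then have "tabB a b = 1" using e cB by simp
      then have "e \<in> list_cycle_edges (PC2 m t)" unfolding lce_PC2 e(1) using tB1[OF e(3,4)] by auto
      then show ?thesis using 1 by blast
    next
      case 2
      then have "tab0 a b = 1" using e c0 by simp
      then show ?thesis using t01[OF e(3,4)] lZa' lZb' unfolding e(1) 2 by auto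
    next
      case 3
      then have "tab1 a b = 1" using e c1 by simp
      then show ?thesis using t11[OF e(3,4)] lZa' lZb' unfolding e(1) 3 by auto
    qed
    then show "e \<in> (\<Union>c\<in>PC2 m ` {..<m-2} \<union> {Za2 m, Zb2 m}. list_cycle_edges c)" by auto
  next
    fix e assume "e \<in> (\<Union>c\<in>PC2 m ` {..<m-2} \<union> {Za2 m, Zb2 m}. list_cycle_edges c)"
    then consider u where "u < m - 2" "e \<in> list_cycle_edges (PC2 m u)"
      | "e \<in> list_cycle_edges (Za2 m)" | "e \<in> list_cycle_edges (Zb2 m)" by auto
    then show "e \<in> FF m 1"
    proof cases
      case 1 then show ?thesis unfolding lce_PC2
        by (auto intro!: inFF simp: cB tabB_def)
    next
      case 2
      have "{E m (m-2) 1 1, E m (m-1) 1 0, E m (m-1) 2 0, E m (m-2) 1 2} \<subseteq> FF m 1"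
        using mm by (auto intro!: inFF simp: c0 c1 c1' tab0_def tab1_def)
      then show ?thesis using 2 lZa by blast
    next
      case 3
      have "{E m (m-2) 2 0, E m (m-1) 0 3, E m (m-1) 3 3, E m (m-2) 2 3} \<subseteq> FF m 1"
        using mm by (auto intro!: inFF simp: c0 c1 c1' tab0_def tab1_def)
      then show ?thesis using 3 lZb by blast
    qed
  qed
qed


theorem mainTheorem4:
  fixes m :: nat
  assumes "m \<ge> 3"
  shows "\<exists>F1 F2 F3 F4.
    F1 \<union> F2 \<union> F3 \<union> F4 = lex_edges (cycle_graph_edges m) 4 \<and>
    F1 \<inter> F2 = {} \<and> F1 \<inter> F3 = {} \<and> F1 \<inter> F4 = {} \<and>
    F2 \<inter> F3 = {} \<and> F2 \<inter> F4 = {} \<and> F3 \<inter> F4 = {} \<and>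
    is_Ck_factor 4 (lex_vertices (cycle_graph_vertices m) 4) (lex_edges (cycle_graph_edges m) 4) F1 \<and>
    is_Ck_factor 4 (lex_vertices (cycle_graph_vertices m) 4) (lex_edges (cycle_graph_edges m) 4) F2 \<and>
    is_Ck_factor m (lex_vertices (cycle_graph_vertices m) 4) (lex_edges (cycle_graph_edges m) 4) F3 \<and>
    is_Ck_factor m (lex_vertices (cycle_graph_vertices m) 4) (lex_edges (cycle_graph_edges m) 4) F4"
proof -
  have f1: "is_Ck_factor 4 (lex_vertices (cycle_graph_vertices m) 4) (lex_edges (cycle_graph_edges m) 4) (FF m 0)"
    using F1_even[OF assms] F1_odd[OF assms] by blast
  have f2: "is_Ck_factor 4 (lex_vertices (cycle_graph_vertices m) 4) (lex_edges (cycle_graph_edges m) 4) (FF m 1)"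
    using F2_even[OF assms] F2_odd[OF assms] by blast
  show ?thesis
    apply (rule exI[of _ "FF m 0"], rule exI[of _ "FF m 1"], rule exI[of _ "FF m 2"], rule exI[of _ "FF m 3"])
    using FF_union[OF assms] FF_disj[OF assms] f1 f2 F3_factor[OF assms] F4_factor[OF assms]
    by simp
qed

end
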